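(* Let $\mathcal{P}$ be a collection of cells. Let $a=(i,j)$, $b=(k,l)$ with $i<k$, $j<l$, and $\beta=(p,q)$ with $p>k$, $q>l$, and suppose $[a,b]$ and $[\alpha,\beta]$ with $\alpha=(i,l)$ are inner intervals of $\mathcal{P}$ (so $\alpha$ is the upper left corner $c$ of $[a,b]$). Put $c=\alpha=(i,l)$, $d=(k,j)$, $\gamma=(i,q)$, $\delta=(p,l)$, $h=(k,q)$, $r=(p,j)$. Let $<^{\mathsf{P}}$ be a $\mathsf{P}$-order on $V(\mathcal{P})$ and suppose that the leading monomials of $f_{a,b}$ and $f_{\alpha,\beta}$ with respect to $<^{\mathsf{P}}_{\mathrm{lex}}$ are not coprime. Then $S(f_{a,b},f_{\alpha,\beta})$ reduces to $0$ modulo $\mathcal{G}$ with respect to $<^{\mathsf{P}}_{\mathrm{lex}}$ if and only if one of the following holds: (1) $x_dx_\delta x_\gamma<^{\mathsf{P}}_{\mathrm{lex}}x_\beta x_ax_b$, and ($h,\delta<^{\mathsf{P}}b$ or $h,\delta<^{\mathsf{P}}\beta$); (2) $x_dx_\delta x_\gamma<^{\mathsf{P}}_{\mathrm{lex}}x_\beta x_ax_b$, $[d,\delta]$ is an inner interval of $\mathcal{P}$, and ($r,\gamma<^{\mathsf{P}}a$ or $r,\gamma<^{\mathsf{P}}\beta$); (3) $x_\beta x_ax_b<^{\mathsf{P}}_{\mathrm{lex}}x_dx_\delta x_\gamma$, and ($h,a<^{\mathsf{P}}d$ or $h,a<^{\mathsf{P}}\gamma$); (4) $x_\beta x_ax_b<^{\mathsf{P}}_{\mathrm{lex}}x_dx_\delta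 x_\gamma$, $[d,\delta]$ is an inner interval of $\mathcal{P}$, and ($r,b<^{\mathsf{P}}d$ or $r,b<^{\mathsf{P}}\delta$).
   Context: For $a=(i,j), b=(k,l)\in\mathbb{Z}^2$ with $a\le b$ componentwise, the interval $[a,b]=\{(m,n)\in\mathbb{Z}^2: i\le m\le k,\ j\le n\le l\}$; it is proper if $i<k$ and $j<l$, in which case $a,b$ are its diagonal corners and $(i,l)$ (upper left), $(k,j)$ (lower right) its anti-diagonal corners. A cell is a proper interval $[v,v+(1,1)]$; its vertices are its four corners. A collection of cells $\mathcal{P}$ is a nonempty finite set of cells; $V(\mathcal{P})$ is the set of all vertices of its cells. A proper interval $[a,b]$ is an inner interval of $\mathcal{P}$ if every cell $[v,v+(1,1)]\subseteq[a,b]$ belongs to $\mathcal{P}$. Let $K$ be a field and $S=K[x_v: v\in V(\mathcal{P})]$. For an inner interval $[a,b]$ with upper left corner $c$ and lower right corner $d$, put $f_{a,b}=x_ax_b-x_cx_d$; $\mathcal{G}$ is the set of all such inner 2-minors of $\mathcal{P}$. A $\mathsf{P}$-order is a total order $<^{\mathsf{P}}$ on $V(\mathcal{P})$; $<^{\mathsf{P}}_{\mathrm{lex}}$ is the lexicographic monomial order on $S$ with $x_u<x_v\iff u<^{\mathsf{P}}v$. For vertices $u,v,w$, "$u,v<^{\mathsf{P}}w$" means $u<^{\mathsf{P}}w$ and $v<^{\mathsf{P}}w$. *)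

theory Defs
  imports "HOL-Library.Poly_Mapping"
begin

type_synonym vertex = "int \<times> int"

text \<open>A cell [v, v+(1,1)] is represented by its lower left corner v;
  a collection of cells is a nonempty finite set of such corners.\<close>

definition collection_of_cells :: "vertex set \<Rightarrow> bool" where
  "collection_of_cells P \<longleftrightarrow> finite P \<and> P \<noteq> {}"

definition cell_vertices :: "vertex \<Rightarrow> vertex set" where
  "cell_vertices v = {v, (fst v + 1, snd v), (fst v, snd v + 1), (fst v + 1, snd v + 1)}"

definition V :: "vertex set \<Rightarrow> vertex set" where
  "V P = (\<Union>v\<in>P. cell_vertices v)"

definition interval :: "vertex \<Rightarrow> vertex \<Rightarrow> vertex set" where
  "interval a b = {(m, n). fst a \<le> m \<and> m \<le> fst b \<and> snd a \<le> n \<and> n \<le> snd b}"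

definition proper_interval :: "vertex \<Rightarrow> vertex \<Rightarrow> bool" where
  "proper_interval a b \<longleftrightarrow> fst a < fst b \<and> snd a < snd b"

definition inner_interval :: "vertex set \<Rightarrow> vertex \<Rightarrow> vertex \<Rightarrow> bool" where
  "inner_interval P a b \<longleftrightarrow> proper_interval a b \<and>
     (\<forall>v. interval v (fst v + 1, snd v + 1) \<subseteq> interval a b \<longrightarrow> v \<in> P)"

definition P_order :: "vertex set \<Rightarrow> (vertex \<Rightarrow> vertex \<Rightarrow> bool) \<Rightarrow> bool" where
  "P_order P lt \<longleftrightarrow>
     (\<forall>u v. lt u v \<longrightarrow> u \<in> V P \<and> v \<in> V P) \<and>
     (\<forall>u. \<not> lt u u) \<and>
     (\<forall>u v w. lt u v \<longrightarrow> lt v w \<longrightarrow> lt u w) \<and>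
     (\<forall>u\<in>V P. \<forall>v\<in>V P. u \<noteq> v \<longrightarrow> lt u v \<or> lt v u)"

type_synonym monom = "vertex \<Rightarrow>\<^sub>0 nat"
type_synonym 'k mpoly = "monom \<Rightarrow>\<^sub>0 'k"

definition var :: "vertex \<Rightarrow> ('k::comm_ring_1) mpoly" where
  "var v = Poly_Mapping.single (Poly_Mapping.single v 1) 1"

definition in_S :: "vertex set \<Rightarrow> ('k::comm_ring_1) mpoly \<Rightarrow> bool" where
  "in_S P f \<longleftrightarrow> (\<forall>m\<in>Poly_Mapping.keys f. Poly_Mapping.keys (m::monom) \<subseteq> V P)"

definition lex_less :: "(vertex \<Rightarrow> vertex \<Rightarrow> bool) \<Rightarrow> monom \<Rightarrow> monom \<Rightarrow> bool" where
  "lex_less lt m1 m2 \<longleftrightarrow>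
     (\<exists>v. Poly_Mapping.lookup m1 v < Poly_Mapping.lookup m2 v \<and> (\<forall>w. lt v w \<longrightarrow> Poly_Mapping.lookup m1 w = Poly_Mapping.lookup m2 w))"

definition lex_le :: "(vertex \<Rightarrow> vertex \<Rightarrow> bool) \<Rightarrow> monom \<Rightarrow> monom \<Rightarrow> bool" where
  "lex_le lt m1 m2 \<longleftrightarrow> m1 = m2 \<or> lex_less lt m1 m2"

definition lead_monom :: "(vertex \<Rightarrow> vertex \<Rightarrow> bool) \<Rightarrow> ('k::comm_ring_1) mpoly \<Rightarrow> monom" where
  "lead_monom lt f = (THE m. m \<in> Poly_Mapping.keys f \<and> (\<forall>m'\<in>Poly_Mapping.keys f. lex_le lt m' m))"

definition lead_coeff_m :: "(vertex \<Rightarrow> vertex \<Rightarrow> bool) \<Rightarrow> ('k::comm_ring_1) mpoly \<Rightarrow> 'k" where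
  "lead_coeff_m lt f = Poly_Mapping.lookup f (lead_monom lt f)"

definition monom_lcm :: "monom \<Rightarrow> monom \<Rightarrow> monom" where
  "monom_lcm m1 m2 = m1 + (m2 - m1)"

definition coprime_monom :: "monom \<Rightarrow> monom \<Rightarrow> bool" where
  "coprime_monom m1 m2 \<longleftrightarrow> (\<forall>v. Poly_Mapping.lookup m1 v = 0 \<or> Poly_Mapping.lookup m2 v = 0)"

definition S_poly :: "(vertex \<Rightarrow> vertex \<Rightarrow> bool) \<Rightarrow> ('k::field) mpoly \<Rightarrow> 'k mpoly \<Rightarrow> 'k mpoly" where
  "S_poly lt f g =
    (let L = monom_lcm (lead_monom lt f) (lead_monom lt g) in
       Poly_Mapping.single (L - lead_monom lt f) (1 / lead_coeff_m lt f) * f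
     - Poly_Mapping.single (L - lead_monom lt g) (1 / lead_coeff_m lt g) * g)"

definition inner_minor :: "vertex \<Rightarrow> vertex \<Rightarrow> ('k::comm_ring_1) mpoly" where
  "inner_minor a b = var a * var b - var (fst a, snd b) * var (fst b, snd a)"

definition G :: "vertex set \<Rightarrow> ('k::comm_ring_1) mpoly set" where
  "G P = {inner_minor a b | a b. inner_interval P a b}"

text \<open>f reduces to 0 modulo G (Herzog--Hibi): f has a standard expression
  f = sum of u_g g over g in G with remainder 0, i.e. lm(u_g g) \<le> lm(f) whenever u_g g \<noteq> 0.\<close>
definition reduces_to_zero ::
  "vertex set \<Rightarrow> (vertex \<Rightarrow> vertex \<Rightarrow> bool) \<Rightarrow> ('k::field) mpoly \<Rightarrow> bool" where
  "reduces_to_zero P lt f \<longleftrightarrow>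
     (\<exists>u :: 'k mpoly \<Rightarrow> 'k mpoly.
        (\<forall>g\<in>G P. in_S P (u g)) \<and>
        f = (\<Sum>g\<in>G P. u g * g) \<and>
        (\<forall>g\<in>G P. u g * g \<noteq> 0 \<longrightarrow> f \<noteq> 0 \<and> lex_le lt (lead_monom lt (u g * g)) (lead_monom lt f)))"

end

theory Submission
  imports Defs
begin


abbreviation X :: "vertex \<Rightarrow> monom" where "X v \<equiv> Poly_Mapping.single v 1"
abbreviation mon :: "monom \<Rightarrow> 'k::comm_ring_1 mpoly" where "mon m \<equiv> Poly_Mapping.single m 1"

lemma var_mult: "(var a :: 'k::comm_ring_1 mpoly) * var b = mon (X a + X b)"
  by (simp add: var_def mult_single)

lemma inner_minor_eq: "(inner_minor a b :: 'k::comm_ring_1 mpoly) =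
   mon (X a + X b) - mon (X (fst a, snd b) + X (fst b, snd a))"
  by (simp add: inner_minor_def var_mult)

lemma lookupX: "Poly_Mapping.lookup (X u) w = (if u = w then 1 else 0)"
  by (simp add: lookup_single when_def)

lemma X2_neq: "u \<noteq> w \<Longrightarrow> u \<noteq> z \<Longrightarrow> X u + X v \<noteq> X w + X z"
proof
  assume "u \<noteq> w" "u \<noteq> z" "X u + X v = X w + X z"
  then have "Poly_Mapping.lookup (X u + X v) u = Poly_Mapping.lookup (X w + X z) u" by simp
  then show False using \<open>u \<noteq> w\<close> \<open>u \<noteq> z\<close> by (simp add: lookup_add lookup_single when_def)
qed

lemma X3_neq: "u \<noteq> w \<Longrightarrow> u \<noteq> z \<Longrightarrow> u \<noteq> y \<Longrightarrow> X u + X v + X v' \<noteq> X w + X z + X y"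
proof
  assume "u \<noteq> w" "u \<noteq> z" "u \<noteq> y" "X u + X v + X v' = X w + X z + X y"
  then have "Poly_Mapping.lookup (X u + X v + X v') u = Poly_Mapping.lookup (X w + X z + X y) u" by simp
  then show False using \<open>u \<noteq> w\<close> \<open>u \<noteq> z\<close> \<open>u \<noteq> y\<close> by (simp add: lookup_add lookup_single when_def)
qed

lemma keys_X: "Poly_Mapping.keys (X u) = {u}" by simp

lemma keys_add_nat: "Poly_Mapping.keys ((m1::'a \<Rightarrow>\<^sub>0 nat) + m2) = Poly_Mapping.keys m1 \<union> Poly_Mapping.keys m2"
  by (auto simp: in_keys_iff lookup_add)

lemma keys_diff': "Poly_Mapping.keys ((f::'a \<Rightarrow>\<^sub>0 'b::ab_group_add) - g) \<subseteq> Poly_Mapping.keys f \<union> Poly_Mapping.keys g"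
  by (auto simp: in_keys_iff lookup_minus)

lemma keys_uminus': "Poly_Mapping.keys (- (f::'a \<Rightarrow>\<^sub>0 'b::ab_group_add)) = Poly_Mapping.keys f"
  by (auto simp: in_keys_iff)

lemma keys_sum': "Poly_Mapping.keys (sum b I) \<subseteq> (\<Union>i \<in>I. Poly_Mapping.keys(b i))"
proof (induction I rule: infinite_finite_induct)
  case (insert i I)
  then show ?case
    using keys_add [of "b i" "sum b I"] by auto
qed auto

lemma keys_two: "m1 \<noteq> m2 \<Longrightarrow> Poly_Mapping.keys (mon m1 - mon m2 :: 'k::comm_ring_1 mpoly) = {m1, m2}"
  by (auto simp: in_keys_iff lookup_minus lookup_single when_def split: if_splits)

lemma mult_single_keys: "Poly_Mapping.keys (f * Poly_Mapping.single s (c::'k::comm_ring_1)) \<subseteq> (\<lambda>t. t + s) ` Poly_Mapping.keys (f::'a::comm_monoid_add \<Rightarrow>\<^sub>0 'k)"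
  using keys_mult[of f "Poly_Mapping.single s c"] by (auto split: if_splits)

lemma sum_monomials: "(\<Sum>k\<in>Poly_Mapping.keys f. Poly_Mapping.single k (Poly_Mapping.lookup f k)) = (f::'a \<Rightarrow>\<^sub>0 'b::comm_monoid_add)"
proof (rule poly_mapping_eqI)
  fix t
  have "Poly_Mapping.lookup (\<Sum>k\<in>Poly_Mapping.keys f. Poly_Mapping.single k (Poly_Mapping.lookup f k)) t
     = (\<Sum>k\<in>Poly_Mapping.keys f. if k = t then Poly_Mapping.lookup f k else 0)"
    by (simp add: lookup_sum lookup_single when_def)
  also have "\<dots> = Poly_Mapping.lookup f t" by (simp add: in_keys_iff)
  finally show "Poly_Mapping.lookup (\<Sum>k\<in>Poly_Mapping.keys f. Poly_Mapping.single k (Poly_Mapping.lookup f k)) t = Poly_Mapping.lookup f t" .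
qed

lemma lookup_mult_single: "Poly_Mapping.lookup (f * Poly_Mapping.single s (1::'k::comm_ring_1)) (t + s) = Poly_Mapping.lookup (f::'a::cancel_comm_monoid_add \<Rightarrow>\<^sub>0 'k) t"
proof -
  have "f = (\<Sum>k\<in>Poly_Mapping.keys f. Poly_Mapping.single k (Poly_Mapping.lookup f k))"
    by (rule sum_monomials[symmetric])
  then have "f * Poly_Mapping.single s 1 = (\<Sum>k\<in>Poly_Mapping.keys f. Poly_Mapping.single k (Poly_Mapping.lookup f k)) * Poly_Mapping.single s 1"
    by simp
  also have "\<dots> = (\<Sum>k\<in>Poly_Mapping.keys f. Poly_Mapping.single k (Poly_Mapping.lookup f k) * Poly_Mapping.single s 1)"
    by (rule sum_distrib_right)
  also have "\<dots> = (\<Sum>k\<in>Poly_Mapping.keys f. Poly_Mapping.single (k + s) (Poly_Mapping.lookup f k))"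
    by (simp add: mult_single)
  finally have "f * Poly_Mapping.single s 1 = (\<Sum>k\<in>Poly_Mapping.keys f. Poly_Mapping.single (k + s) (Poly_Mapping.lookup f k))" .
  then have "Poly_Mapping.lookup (f * Poly_Mapping.single s 1) (t + s) = (\<Sum>k\<in>Poly_Mapping.keys f. if k = t then Poly_Mapping.lookup f k else 0)"
    by (simp add: lookup_sum lookup_single when_def)
  also have "\<dots> = Poly_Mapping.lookup f t" by (simp add: in_keys_iff)
  finally show ?thesis .
qed

lemma cell_sub: "interval v (fst v + 1, snd v + 1) \<subseteq> interval a b \<longleftrightarrow>
   fst a \<le> fst v \<and> fst v + 1 \<le> fst b \<and> snd a \<le> snd v \<and> snd v + 1 \<le> snd b"
proof
  assume h: "interval v (fst v + 1, snd v + 1) \<subseteq> interval a b"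
  have "v \<in> interval v (fst v + 1, snd v + 1)" unfolding interval_def by (cases v) auto
  moreover have "(fst v + 1, snd v + 1) \<in> interval v (fst v + 1, snd v + 1)" unfolding interval_def by auto
  ultimately have "v \<in> interval a b" "(fst v + 1, snd v + 1) \<in> interval a b" using h by auto
  then show "fst a \<le> fst v \<and> fst v + 1 \<le> fst b \<and> snd a \<le> snd v \<and> snd v + 1 \<le> snd b"
    unfolding interval_def by (cases v) auto
next
  assume "fst a \<le> fst v \<and> fst v + 1 \<le> fst b \<and> snd a \<le> snd v \<and> snd v + 1 \<le> snd b"
  then show "interval v (fst v + 1, snd v + 1) \<subseteq> interval a b" unfolding interval_def by auto
qed

lemma inner_iff: "inner_interval P a b \<longleftrightarrow> proper_interval a b \<and>
   (\<forall>x y. fst a \<le> x \<and> x + 1 \<le> fst b \<and> snd a \<le> y \<and> y + 1 \<le> snd b \<longrightarrow> (x, y) \<in> P)"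
  unfolding inner_interval_def cell_sub by auto

lemma V_mem: "(x, y) \<in> P \<Longrightarrow> (x, y) \<in> V P \<and> (x + 1, y) \<in> V P \<and> (x, y + 1) \<in> V P \<and> (x + 1, y + 1) \<in> V P"
  unfolding V_def cell_vertices_def by (intro conjI; rule UN_I[of "(x, y)"]; simp)

lemma corners:
  assumes "inner_interval P a b"
  shows "a \<in> V P \<and> b \<in> V P \<and> (fst a, snd b) \<in> V P \<and> (fst b, snd a) \<in> V P"
proof -
  obtain x1 y1 x2 y2 where ab: "a = (x1, y1)" "b = (x2, y2)" by (cases a, cases b) auto
  have pr: "x1 < x2" "y1 < y2" "\<forall>x y. x1 \<le> x \<and> x + 1 \<le> x2 \<and> y1 \<le> y \<and> y + 1 \<le> y2 \<longrightarrow> (x, y) \<in> P"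
    using assms unfolding inner_iff proper_interval_def ab by auto
  have "(x1, y1) \<in> P" "(x2 - 1, y2 - 1) \<in> P" "(x1, y2 - 1) \<in> P" "(x2 - 1, y1) \<in> P"
    using pr by auto
  then have "(x1, y1) \<in> V P" "(x2 - 1 + 1, y2 - 1 + 1) \<in> V P" "(x1, y2 - 1 + 1) \<in> V P" "(x2 - 1 + 1, y1) \<in> V P"
    using V_mem by blast+
  then show ?thesis unfolding ab by simp
qed

lemma finite_V: "finite P \<Longrightarrow> finite (V P)"
  unfolding V_def cell_vertices_def by auto

lemma finite_G: "finite P \<Longrightarrow> finite (G P :: 'k::comm_ring_1 mpoly set)"
proof -
  assume "finite P"
  have "G P \<subseteq> (\<lambda>(a, b). inner_minor a b :: 'k mpoly) ` (V P \<times> V P)"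
    unfolding G_def using corners by fastforce
  then show ?thesis using finite_V[OF \<open>finite P\<close>] by (meson finite_SigmaI finite_imageI finite_subset)
qed

lemma sum_two:
  assumes "finite A" "x \<in> A" "y \<in> A" "x \<noteq> y"
  shows "(\<Sum>g\<in>A. (if g = x then c else if g = y then e else 0) * g) = c * x + e * (y :: 'a::comm_ring_1)"
proof -
  let ?f = "\<lambda>g. (if g = x then c else if g = y then e else 0) * g"
  have "sum ?f A = ?f x + sum ?f (A - {x})" by (rule sum.remove[OF assms(1,2)])
  also have "sum ?f (A - {x}) = ?f y + sum ?f (A - {x} - {y})"
    by (rule sum.remove) (use assms in auto)
  also have "sum ?f (A - {x} - {y}) = 0" by (rule sum.neutral) auto
  finally show ?thesis using assms(4) by simp
qed

locale po =
  fixes P :: "vertex set" and lt :: "vertex \<Rightarrow> vertex \<Rightarrow> bool"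
  assumes po: "P_order P lt"
begin

definition sp :: "monom \<Rightarrow> bool" where "sp m \<longleftrightarrow> Poly_Mapping.keys m \<subseteq> V P"

lemma lt_V: "lt u v \<Longrightarrow> u \<in> V P \<and> v \<in> V P"
  using po[unfolded P_order_def, THEN conjunct1] by blast
lemma lt_irr: "\<not> lt u u"
  using po[unfolded P_order_def, THEN conjunct2, THEN conjunct1] by blast
lemma lt_trans: "lt u v \<Longrightarrow> lt v w \<Longrightarrow> lt u w"
  using po[unfolded P_order_def, THEN conjunct2, THEN conjunct2, THEN conjunct1] by blast
lemma lt_total: "u \<in> V P \<Longrightarrow> v \<in> V P \<Longrightarrow> u \<noteq> v \<Longrightarrow> lt u v \<or> lt v u"
  using po[unfolded P_order_def, THEN conjunct2, THEN conjunct2, THEN conjunct2] by blast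

lemma sp_add: "sp a \<Longrightarrow> sp b \<Longrightarrow> sp (a + b)"
  unfolding sp_def keys_add_nat by blast
lemma sp_X: "v \<in> V P \<Longrightarrow> sp (X v)" unfolding sp_def by simp

lemma lex_irrefl: "\<not> lex_less lt m m" unfolding lex_less_def by auto

lemma lex_trans:
  assumes "sp m2" "sp m3" "lex_less lt m1 m2" "lex_less lt m2 m3"
  shows "lex_less lt m1 m3"
proof -
  obtain v where v1: "Poly_Mapping.lookup m1 v < Poly_Mapping.lookup m2 v"
    and v2: "\<forall>w. lt v w \<longrightarrow> Poly_Mapping.lookup m1 w = Poly_Mapping.lookup m2 w"
    using assms(3) unfolding lex_less_def by blast
  obtain w where w1: "Poly_Mapping.lookup m2 w < Poly_Mapping.lookup m3 w"
    and w2: "\<forall>x. lt w x \<longrightarrow> Poly_Mapping.lookup m2 x = Poly_Mapping.lookup m3 x"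
    using assms(4) unfolding lex_less_def by blast
  have vV: "v \<in> V P" using v1 assms(1) unfolding sp_def by (auto simp: in_keys_iff)
  have wV: "w \<in> V P" using w1 assms(2) unfolding sp_def by (auto simp: in_keys_iff)
  consider "v = w" | "lt v w" | "lt w v" using lt_total[OF vV wV] by blast
  then show ?thesis
  proof cases
    case 1
    have "Poly_Mapping.lookup m1 v < Poly_Mapping.lookup m3 v" using v1 w1 1 by simp
    moreover have "\<forall>x. lt v x \<longrightarrow> Poly_Mapping.lookup m1 x = Poly_Mapping.lookup m3 x"
      using v2 w2 1 by simp
    ultimately show ?thesis unfolding lex_less_def by blast
  next
    case 2
    have "Poly_Mapping.lookup m1 w < Poly_Mapping.lookup m3 w" using v2[rule_format, OF 2] w1 by simp
    moreover have "\<forall>x. lt w x \<longrightarrow> Poly_Mapping.lookup m1 x = Poly_Mapping.lookup m3 x"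
      using v2 w2 2 lt_trans by simp
    ultimately show ?thesis unfolding lex_less_def by blast
  next
    case 3
    have "Poly_Mapping.lookup m1 v < Poly_Mapping.lookup m3 v" using v1 w2 3 by simp
    moreover have "\<forall>x. lt v x \<longrightarrow> Poly_Mapping.lookup m1 x = Poly_Mapping.lookup m3 x"
      using v2 w2 3 lt_trans by simp
    ultimately show ?thesis unfolding lex_less_def by blast
  qed
qed

lemma lex_asym: "sp m1 \<Longrightarrow> sp m2 \<Longrightarrow> lex_less lt m1 m2 \<Longrightarrow> \<not> lex_less lt m2 m1"
  using lex_trans[of m2 m1 m1] lex_irrefl[of m1] by blast

lemma finite_max_rel: "finite D \<Longrightarrow> D \<noteq> {} \<Longrightarrow> \<exists>v\<in>D. \<forall>w\<in>D. \<not> lt v w"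
proof (induction D rule: finite_ne_induct)
  case (singleton x) then show ?case using lt_irr by blast
next
  case (insert x F)
  then obtain v where v: "v \<in> F" "\<forall>w\<in>F. \<not> lt v w" by blast
  show ?case
  proof (cases "lt v x")
    case True
    have "\<forall>w\<in>insert x F. \<not> lt x w"
    proof
      fix w assume w: "w \<in> insert x F"
      show "\<not> lt x w"
      proof
        assume "lt x w"
        then have "lt v w" using lt_trans[OF True] by blast
        then have "w \<notin> F" using v(2) by blast
        then have "w = x" using w by blast
        then show False using \<open>lt x w\<close> lt_irr by simp
      qed
    qed
    then show ?thesis by blast
  next
    case False then show ?thesis using v by blast
  qed
qed

lemma lex_total:
  assumes "sp m1" "sp m2" "m1 \<noteq> m2"
  shows "lex_less lt m1 m2 \<or> lex_less lt m2 m1"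
proof -
  let ?D = "{v. Poly_Mapping.lookup m1 v \<noteq> Poly_Mapping.lookup m2 v}"
  have "?D \<subseteq> Poly_Mapping.keys m1 \<union> Poly_Mapping.keys m2" by (auto simp: in_keys_iff)
  then have fin: "finite ?D" by (rule finite_subset) simp
  have ne: "?D \<noteq> {}"
  proof
    assume "?D = {}"
    then have "\<And>v. Poly_Mapping.lookup m1 v = Poly_Mapping.lookup m2 v" by blast
    then have "m1 = m2" by (rule poly_mapping_eqI)
    then show False using assms(3) by contradiction
  qed
  obtain v where v: "v \<in> ?D" "\<forall>w\<in>?D. \<not> lt v w" using finite_max_rel[OF fin ne] by blast
  have eq: "\<forall>w. lt v w \<longrightarrow> Poly_Mapping.lookup m1 w = Poly_Mapping.lookup m2 w" using v(2) by blast
  show ?thesis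
  proof (cases "Poly_Mapping.lookup m1 v < Poly_Mapping.lookup m2 v")
    case True then show ?thesis unfolding lex_less_def using eq by blast
  next
    case False
    then have "Poly_Mapping.lookup m2 v < Poly_Mapping.lookup m1 v" using v(1) by simp
    moreover have "\<forall>w. lt v w \<longrightarrow> Poly_Mapping.lookup m2 w = Poly_Mapping.lookup m1 w" using eq by simp
    ultimately have "lex_less lt m2 m1" unfolding lex_less_def by blast
    then show ?thesis by blast
  qed
qed

lemma lex_add: "lex_less lt m1 m2 \<Longrightarrow> lex_less lt (m1 + t) (m2 + t)"
  unfolding lex_less_def by (auto simp: lookup_add)

lemma lex_add_left: "lex_less lt m1 m2 \<Longrightarrow> lex_less lt (t + m1) (t + m2)"
  using lex_add by (simp add: add.commute)

lemma lex_le_add: "lex_le lt m1 m2 \<Longrightarrow> lex_le lt (m1 + t) (m2 + t)"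
  unfolding lex_le_def using lex_add by blast

lemma lex_le_less_trans: "sp m2 \<Longrightarrow> sp m3 \<Longrightarrow> lex_le lt m1 m2 \<Longrightarrow> lex_less lt m2 m3 \<Longrightarrow> lex_less lt m1 m3"
  unfolding lex_le_def using lex_trans[of m2 m3 m1] by blast

lemma lex_le_trans: "sp m2 \<Longrightarrow> sp m3 \<Longrightarrow> lex_le lt m1 m2 \<Longrightarrow> lex_le lt m2 m3 \<Longrightarrow> lex_le lt m1 m3"
  unfolding lex_le_def using lex_trans[of m2 m3 m1] by blast

lemma max_exists:
  "finite K \<Longrightarrow> K \<noteq> {} \<Longrightarrow> \<forall>m\<in>K. sp m \<Longrightarrow> \<exists>m\<in>K. \<forall>m'\<in>K. lex_le lt m' m"
proof (induction K rule: finite_ne_induct)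
  case (singleton x) then show ?case by (simp add: lex_le_def)
next
  case (insert x F)
  then obtain m where m: "m \<in> F" "\<forall>m'\<in>F. lex_le lt m' m" by auto
  show ?case
  proof (cases "lex_le lt x m")
    case True then show ?thesis using m by auto
  next
    case False
    then have "lex_less lt m x" using lex_total[of x m] insert.prems m(1) unfolding lex_le_def by auto
    have "\<forall>m'\<in>insert x F. lex_le lt m' x"
    proof
      fix m' assume "m' \<in> insert x F"
      then consider "m' = x" | "m' \<in> F" by blast
      then show "lex_le lt m' x"
      proof cases
        case 1 then show ?thesis by (simp add: lex_le_def)
      next
        case 2
        have "lex_less lt m' x" using lex_le_less_trans[of m x m'] insert.prems m 2 \<open>lex_less lt m x\<close> by blast
        then show ?thesis by (simp add: lex_le_def)
      qed
    qed
    then show ?thesis by blast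
  qed
qed

lemma lm_char:
  assumes "\<forall>m\<in>Poly_Mapping.keys f. sp m" "m \<in> Poly_Mapping.keys f"
    "\<forall>m'\<in>Poly_Mapping.keys f. lex_le lt m' m"
  shows "lead_monom lt f = m"
  unfolding lead_monom_def
proof (rule the_equality)
  show "m \<in> Poly_Mapping.keys f \<and> (\<forall>m'\<in>Poly_Mapping.keys f. lex_le lt m' m)" using assms by blast
next
  fix m'' assume h: "m'' \<in> Poly_Mapping.keys f \<and> (\<forall>m'\<in>Poly_Mapping.keys f. lex_le lt m' m'')"
  then have "lex_le lt m m''" "lex_le lt m'' m" using assms by auto
  moreover have "sp m" "sp m''" using assms h by auto
  ultimately show "m'' = m" using lex_asym[of m m''] unfolding lex_le_def by blast
qed

lemma lm_prop:
  assumes "f \<noteq> 0" "\<forall>m\<in>Poly_Mapping.keys f. sp m"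
  shows "lead_monom lt f \<in> Poly_Mapping.keys f \<and> (\<forall>m'\<in>Poly_Mapping.keys f. lex_le lt m' (lead_monom lt f))"
proof -
  obtain m where m: "m \<in> Poly_Mapping.keys f" "\<forall>m'\<in>Poly_Mapping.keys f. lex_le lt m' m"
    using max_exists[of "Poly_Mapping.keys f"] assms by auto
  have "lead_monom lt f = m" using lm_char[OF assms(2) m] .
  then show ?thesis using m by (simp only:)
qed

lemma lm_le:
  assumes "f \<noteq> 0" "\<forall>m\<in>Poly_Mapping.keys f. sp m" "\<forall>m\<in>Poly_Mapping.keys f. lex_le lt m M"
  shows "lex_le lt (lead_monom lt f) M"
proof -
  have "lead_monom lt f \<in> Poly_Mapping.keys f" using lm_prop[OF assms(1,2)] by (rule conjunct1)
  then show ?thesis using assms(3) by blast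
qed

lemma lm_keys2:
  assumes "Poly_Mapping.keys f = {m1, m2}" "sp m1" "sp m2" "lex_less lt m2 m1"
  shows "lead_monom lt f = m1"
proof (rule lm_char)
  show "\<forall>m\<in>Poly_Mapping.keys f. sp m" using assms(1-3) by simp
  show "m1 \<in> Poly_Mapping.keys f" using assms(1) by simp
  show "\<forall>m'\<in>Poly_Mapping.keys f. lex_le lt m' m1" using assms(1,4) unfolding lex_le_def by simp
qed

lemma lm_uminus: "lead_monom lt (- f) = lead_monom lt f"
  unfolding lead_monom_def keys_uminus' ..


lemma lm_mult_ord:
  assumes u: "u \<noteq> 0" "\<forall>m\<in>Poly_Mapping.keys u. sp m" and s: "sp s0" "sp s1" "lex_less lt s1 s0"
  shows "lead_monom lt (u * (mon s0 - mon s1 :: 'k::comm_ring_1 mpoly)) = lead_monom lt u + s0"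
proof -
  define t0 where "t0 = lead_monom lt u"
  have t0: "t0 \<in> Poly_Mapping.keys u" "\<forall>m'\<in>Poly_Mapping.keys u. lex_le lt m' t0"
    using lm_prop[OF u] unfolding t0_def by auto
  have spt0: "sp t0" using t0 u by blast
  have eq: "u * (mon s0 - mon s1) = u * mon s0 - u * mon s1" by (simp add: right_diff_distrib)
  have keys: "Poly_Mapping.keys (u * (mon s0 - mon s1)) \<subseteq> (\<lambda>t. t + s0) ` Poly_Mapping.keys u \<union> (\<lambda>t. t + s1) ` Poly_Mapping.keys u"
    unfolding eq using keys_diff'[of "u * mon s0" "u * mon s1"] mult_single_keys[of u s0 1] mult_single_keys[of u s1 1]
    by blast
  have z: "Poly_Mapping.lookup (u * mon s1) (t0 + s0) = 0"
  proof (rule ccontr)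
    assume "Poly_Mapping.lookup (u * mon s1) (t0 + s0) \<noteq> 0"
    then have "t0 + s0 \<in> Poly_Mapping.keys (u * mon s1)" by (simp add: in_keys_iff)
    then obtain t where t: "t \<in> Poly_Mapping.keys u" "t0 + s0 = t + s1" using mult_single_keys[of u s1 1] by blast
    have "lex_le lt (t + s1) (t0 + s1)" using t0(2) t(1) lex_le_add by blast
    moreover have "lex_less lt (t0 + s1) (t0 + s0)" using lex_add_left[OF s(3)] .
    moreover have "sp (t0 + s1)" "sp (t0 + s0)" using sp_add spt0 s by auto
    ultimately have "lex_less lt (t + s1) (t0 + s0)" using lex_le_less_trans by blast
    then show False using t(2) lex_irrefl by simp
  qed
  have "Poly_Mapping.lookup (u * (mon s0 - mon s1)) (t0 + s0) = Poly_Mapping.lookup u t0"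
    unfolding eq lookup_minus z lookup_mult_single by simp
  then have inkeys: "t0 + s0 \<in> Poly_Mapping.keys (u * (mon s0 - mon s1))" using t0(1) by (simp add: in_keys_iff)
  have spk: "\<forall>m\<in>Poly_Mapping.keys (u * (mon s0 - mon s1)). sp m"
    using keys u(2) s sp_add by blast
  have le: "\<forall>m'\<in>Poly_Mapping.keys (u * (mon s0 - mon s1)). lex_le lt m' (t0 + s0)"
  proof
    fix m' assume "m' \<in> Poly_Mapping.keys (u * (mon s0 - mon s1))"
    then obtain t where t: "t \<in> Poly_Mapping.keys u" "m' = t + s0 \<or> m' = t + s1" using keys by blast
    have a: "lex_le lt (t + s0) (t0 + s0)" using t0(2) t(1) lex_le_add by blast
    have b: "lex_le lt (t + s1) (t0 + s1)" using t0(2) t(1) lex_le_add by blast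
    have c: "lex_less lt (t0 + s1) (t0 + s0)" using lex_add_left[OF s(3)] .
    have "sp (t0 + s1)" "sp (t0 + s0)" using sp_add spt0 s by auto
    then have "lex_less lt (t + s1) (t0 + s0)" using b c lex_le_less_trans by blast
    then show "lex_le lt m' (t0 + s0)" using t(2) a unfolding lex_le_def by blast
  qed
  show ?thesis unfolding t0_def[symmetric] by (rule lm_char[OF spk inkeys le])
qed

lemma lm_mult:
  assumes u: "u \<noteq> 0" "\<forall>m\<in>Poly_Mapping.keys u. sp m" and s: "sp s0" "sp s1" "s0 \<noteq> s1"
  shows "lead_monom lt (u * (mon s0 - mon s1 :: 'k::comm_ring_1 mpoly)) = lead_monom lt u + lead_monom lt (mon s0 - mon s1 :: 'k mpoly)"
proof (cases "lex_less lt s1 s0")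
  case True
  have "lead_monom lt (mon s0 - mon s1 :: 'k mpoly) = s0"
    by (rule lm_keys2[OF keys_two[OF s(3)] s(1,2) True])
  then show ?thesis using lm_mult_ord[OF u s(1,2) True] by simp
next
  case False
  then have F: "lex_less lt s0 s1" using lex_total[OF s] by blast
  have k: "Poly_Mapping.keys (mon s0 - mon s1 :: 'k mpoly) = {s1, s0}" using keys_two[OF s(3)] by auto
  have "lead_monom lt (mon s0 - mon s1 :: 'k mpoly) = s1"
    by (rule lm_keys2[OF k s(2,1) F])
  moreover have "u * (mon s0 - mon s1 :: 'k mpoly) = - (u * (mon s1 - mon s0))" by (simp add: algebra_simps)
  ultimately show ?thesis using lm_mult_ord[OF u s(2,1) F] lm_uminus by metis
qed

lemma pair_aux:
  assumes "lt u1 w" "lt u2 w" "w = v1 \<or> w = v2" "\<not> lt w v1" "\<not> lt w v2"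
  shows "lex_less lt (X u1 + X u2) (X v1 + X v2)"
  unfolding lex_less_def
proof (intro exI conjI allI impI)
  have "u1 \<noteq> w" "u2 \<noteq> w" using assms(1,2) lt_irr by (metis, metis)
  then show "Poly_Mapping.lookup (X u1 + X u2) w < Poly_Mapping.lookup (X v1 + X v2) w"
    using assms(3) by (auto simp: lookup_add lookup_single when_def)
  fix x assume x: "lt w x"
  have "x \<noteq> u1" using x assms(1) lt_trans lt_irr by blast
  moreover have "x \<noteq> u2" using x assms(2) lt_trans lt_irr by blast
  moreover have "x \<noteq> v1" "x \<noteq> v2" using x assms(4,5) by auto
  ultimately show "Poly_Mapping.lookup (X u1 + X u2) x = Poly_Mapping.lookup (X v1 + X v2) x"
    by (simp add: lookup_add lookup_single when_def)
qed

lemma pair_lex: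
  assumes d: "ua \<noteq> va" "ua \<noteq> vb" "ub \<noteq> va" "ub \<noteq> vb" "va \<noteq> vb"
    and V: "ua \<in> V P" "ub \<in> V P" "va \<in> V P" "vb \<in> V P"
  shows "lex_less lt (X ua + X ub) (X va + X vb) \<longleftrightarrow> (lt ua va \<and> lt ub va) \<or> (lt ua vb \<and> lt ub vb)"
proof
  assume "lex_less lt (X ua + X ub) (X va + X vb)"
  then obtain w where w1: "Poly_Mapping.lookup (X ua + X ub) w < Poly_Mapping.lookup (X va + X vb) w"
    and w2: "\<forall>x. lt w x \<longrightarrow> Poly_Mapping.lookup (X ua + X ub) x = Poly_Mapping.lookup (X va + X vb) x"
    unfolding lex_less_def by blast
  have wv: "w = va \<or> w = vb" using w1 by (auto simp: lookup_add lookup_single when_def split: if_splits)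
  have wV: "w \<in> V P" using wv V by blast
  have "lt ua w"
  proof -
    have "ua \<noteq> w" using wv d by blast
    moreover have "\<not> lt w ua"
    proof
      assume "lt w ua"
      then have "Poly_Mapping.lookup (X ua + X ub) ua = Poly_Mapping.lookup (X va + X vb) ua" using w2 by blast
      then show False using d by (simp add: lookup_add lookup_single when_def)
    qed
    ultimately show ?thesis using lt_total[OF V(1) wV] by blast
  qed
  moreover have "lt ub w"
  proof -
    have "ub \<noteq> w" using wv d by blast
    moreover have "\<not> lt w ub"
    proof
      assume "lt w ub"
      then have "Poly_Mapping.lookup (X ua + X ub) ub = Poly_Mapping.lookup (X va + X vb) ub" using w2 by blast
      then show False using d by (simp add: lookup_add lookup_single when_def)
    qed
    ultimately show ?thesis using lt_total[OF V(2) wV] by blast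
  qed
  ultimately show "(lt ua va \<and> lt ub va) \<or> (lt ua vb \<and> lt ub vb)" using wv by blast
next
  assume h: "(lt ua va \<and> lt ub va) \<or> (lt ua vb \<and> lt ub vb)"
  consider "lt va vb" | "lt vb va" using lt_total[OF V(3,4) d(5)] by blast
  then show "lex_less lt (X ua + X ub) (X va + X vb)"
  proof cases
    case 1
    have "lt ua vb" "lt ub vb" using h 1 lt_trans by blast+
    moreover have "\<not> lt vb va" using 1 lt_trans lt_irr by blast
    ultimately show ?thesis using pair_aux[of ua vb ub va vb] lt_irr by blast
  next
    case 2
    have "lt ua va" "lt ub va" using h 2 lt_trans by blast+
    moreover have "\<not> lt va vb" using 2 lt_trans lt_irr by blast
    ultimately show ?thesis using pair_aux[of ua va ub va vb] lt_irr by blast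
  qed
qed


lemma rtz_two:
  assumes fin: "finite (G P :: 'k::field mpoly set)" and g: "g1 \<in> G P" "g2 \<in> G P" "g1 \<noteq> g2"
    and S: "S = c1 * g1 + c2 * (g2 :: 'k::field mpoly)" and c: "in_S P c1" "in_S P c2" and nz: "S \<noteq> 0"
    and l1: "c1 * g1 \<noteq> 0 \<Longrightarrow> lex_le lt (lead_monom lt (c1 * g1)) (lead_monom lt S)"
    and l2: "c2 * g2 \<noteq> 0 \<Longrightarrow> lex_le lt (lead_monom lt (c2 * g2)) (lead_monom lt S)"
  shows "reduces_to_zero P lt S"
  unfolding reduces_to_zero_def
proof (intro exI[of _ "\<lambda>g. if g = g1 then c1 else if g = g2 then c2 else 0"] conjI ballI impI)
  fix g :: "'k mpoly" assume "g \<in> G P"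
  show "in_S P (if g = g1 then c1 else if g = g2 then c2 else 0)"
    using c by (auto simp: in_S_def)
next
  show "S = (\<Sum>g\<in>G P. (if g = g1 then c1 else if g = g2 then c2 else 0) * g)"
    using sum_two[OF fin g] S by simp
next
  fix g :: "'k mpoly" assume "g \<in> G P" "(if g = g1 then c1 else if g = g2 then c2 else 0) * g \<noteq> 0"
  then show "S \<noteq> 0" using nz by simp
next
  fix g :: "'k mpoly" assume "g \<in> G P" and h: "(if g = g1 then c1 else if g = g2 then c2 else 0) * g \<noteq> 0"
  show "lex_le lt (lead_monom lt ((if g = g1 then c1 else if g = g2 then c2 else 0) * g)) (lead_monom lt S)"
  proof (cases "g = g1")
    case True then show ?thesis using h l1 by simp
  next
    case False
    then have "g = g2" using h by (auto split: if_splits)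
    then show ?thesis using h l2 False by simp
  qed
qed

lemma fwd:
  assumes red: "reduces_to_zero P lt (S :: 'k::field mpoly)" and M: "M \<in> Poly_Mapping.keys S" "lead_monom lt S = M"
  shows "\<exists>a' b'. inner_interval P a' b' \<and> (\<forall>v. Poly_Mapping.lookup (lead_monom lt (inner_minor a' b' :: 'k mpoly)) v \<le> Poly_Mapping.lookup M v)"
proof -
  obtain u :: "'k mpoly \<Rightarrow> 'k mpoly" where uS: "\<forall>g\<in>G P. in_S P (u g)" and Ssum: "S = (\<Sum>g\<in>G P. u g * g)"
    and ule: "\<forall>g\<in>G P. u g * g \<noteq> 0 \<longrightarrow> S \<noteq> 0 \<and> lex_le lt (lead_monom lt (u g * g)) (lead_monom lt S)"
    using red unfolding reduces_to_zero_def by blast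
  have "M \<in> Poly_Mapping.keys (\<Sum>g\<in>G P. u g * g)" using M(1) Ssum by simp
  then obtain g where gG: "g \<in> G P" and Mg: "M \<in> Poly_Mapping.keys (u g * g)" using keys_sum'[of "\<lambda>g. u g * g" "G P"] by blast
  obtain a' b' where g: "g = inner_minor a' b'" and inn: "inner_interval P a' b'" using gG unfolding G_def by blast
  define s0 where "s0 = X a' + X b'"
  define s1 where "s1 = X (fst a', snd b') + X (fst b', snd a')"
  have geq: "g = mon s0 - mon s1" unfolding g s0_def s1_def by (rule inner_minor_eq)
  have pr: "fst a' < fst b'" "snd a' < snd b'" using inn unfolding inner_interval_def proper_interval_def by auto
  have s01: "s0 \<noteq> s1" unfolding s0_def s1_def
    by (rule X2_neq) (use pr in \<open>auto simp: prod_eq_iff\<close>)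
  have cV: "a' \<in> V P" "b' \<in> V P" "(fst a', snd b') \<in> V P" "(fst b', snd a') \<in> V P"
    using corners[OF inn] by auto
  have sp0: "sp s0" and sp1: "sp s1" unfolding s0_def s1_def using cV sp_add sp_X by auto
  have ugnz: "u g \<noteq> 0" using Mg by auto
  have spu: "\<forall>m\<in>Poly_Mapping.keys (u g). sp m" using uS gG unfolding in_S_def sp_def by blast
  have L: "lead_monom lt (u g * (mon s0 - mon s1)) = lead_monom lt (u g) + lead_monom lt (mon s0 - mon s1 :: 'k mpoly)"
    by (rule lm_mult[OF ugnz spu sp0 sp1 s01])
  have lmeq: "lead_monom lt (u g * g) = lead_monom lt (u g) + lead_monom lt g"
    using L by (simp only: geq[symmetric])
  have kg: "Poly_Mapping.keys g = {s0, s1}" unfolding geq by (rule keys_two[OF s01])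
  have spk: "\<forall>m\<in>Poly_Mapping.keys (u g * g). sp m"
  proof
    fix m assume "m \<in> Poly_Mapping.keys (u g * g)"
    then obtain t s where "m = t + s" "t \<in> Poly_Mapping.keys (u g)" "s \<in> Poly_Mapping.keys g"
      using keys_mult[of "u g" g] by blast
    then show "sp m" using spu kg sp0 sp1 sp_add by auto
  qed
  have nz: "u g * g \<noteq> 0" using Mg by auto
  have A: "lex_le lt M (lead_monom lt (u g * g))" using lm_prop[OF nz spk] Mg by blast
  have B: "lex_le lt (lead_monom lt (u g * g)) M" using ule gG nz M(2) by blast
  have spM: "sp M" using spk Mg by blast
  have spL: "sp (lead_monom lt (u g * g))" using lm_prop[OF nz spk] spk by blast
  have "lead_monom lt (u g * g) = M" using A B lex_asym[OF spM spL] unfolding lex_le_def by blast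
  then have "M = lead_monom lt (u g) + lead_monom lt g" using lmeq by simp
  then have "\<forall>v. Poly_Mapping.lookup (lead_monom lt g) v \<le> Poly_Mapping.lookup M v"
    by (simp add: lookup_add)
  then show ?thesis using inn g by blast
qed


lemma sp3: "u \<in> V P \<Longrightarrow> v \<in> V P \<Longrightarrow> w \<in> V P \<Longrightarrow> sp (X u + (X v + X w))"
  by (intro sp_add sp_X)
lemma sp3': "u \<in> V P \<Longrightarrow> v \<in> V P \<Longrightarrow> w \<in> V P \<Longrightarrow> sp (X u + X v + X w)"
  by (intro sp_add sp_X)
lemma sp2: "u \<in> V P \<Longrightarrow> v \<in> V P \<Longrightarrow> sp (X u + X v)"
  by (intro sp_add sp_X)

lemma lm_two_le:
  assumes "A \<noteq> B" "sp A" "sp B" "lex_le lt A M" "lex_le lt B M"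
  shows "lex_le lt (lead_monom lt (mon A - mon B :: 'k::comm_ring_1 mpoly)) M"
proof (rule lm_le)
  show "(mon A - mon B :: 'k mpoly) \<noteq> 0" using keys_two[OF assms(1), where 'k='k] by auto
  show "\<forall>m\<in>Poly_Mapping.keys (mon A - mon B :: 'k mpoly). sp m" using keys_two[OF assms(1)] assms by auto
  show "\<forall>m\<in>Poly_Mapping.keys (mon A - mon B :: 'k mpoly). lex_le lt m M" using keys_two[OF assms(1)] assms by auto
qed

lemma lm_in2:
  assumes "A \<noteq> B" "sp A" "sp B"
  shows "(lead_monom lt (mon A - mon B :: 'k::comm_ring_1 mpoly) = A \<and> lex_less lt B A) \<or>
         (lead_monom lt (mon A - mon B :: 'k::comm_ring_1 mpoly) = B \<and> lex_less lt A B)"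
proof (cases "lex_less lt B A")
  case True
  then show ?thesis using lm_keys2[OF keys_two[OF assms(1)] assms(2,3) True] by blast
next
  case False
  then have F: "lex_less lt A B" using lex_total[OF assms(2,3,1)] by blast
  have k: "Poly_Mapping.keys (mon A - mon B :: 'k mpoly) = {B, A}" using keys_two[OF assms(1)] by auto
  show ?thesis using lm_keys2[OF k assms(3,2) F] F by blast
qed

end

lemma lookup2_nz: "Poly_Mapping.lookup (X u + X w) v \<noteq> 0 \<Longrightarrow> v = u \<or> v = w"
  by (auto simp: lookup_add lookup_single when_def split: if_splits)
lemma lookup3_nz: "Poly_Mapping.lookup (X p1 + X p2 + X p3) v \<noteq> 0 \<Longrightarrow> v = p1 \<or> v = p2 \<or> v = p3"
  by (auto simp: lookup_add lookup_single when_def split: if_splits)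
lemma D2: "\<forall>v. Poly_Mapping.lookup (X u + X w) v \<le> Poly_Mapping.lookup M v \<Longrightarrow>
   Poly_Mapping.lookup M u \<noteq> 0 \<and> Poly_Mapping.lookup M w \<noteq> 0"
proof -
  assume h: "\<forall>v. Poly_Mapping.lookup (X u + X w) v \<le> Poly_Mapping.lookup M v"
  have "Poly_Mapping.lookup (X u + X w) u \<noteq> 0" "Poly_Mapping.lookup (X u + X w) w \<noteq> 0"
    by (auto simp: lookup_add lookup_single when_def)
  then show ?thesis using h by (metis le_zero_eq)
qed
lemma lookup_neq: "Poly_Mapping.lookup m w \<noteq> Poly_Mapping.lookup m' w \<Longrightarrow> m \<noteq> m'" by auto

lemma smul: "Poly_Mapping.single s c * (mon A - mon B) = Poly_Mapping.single (s + A) c - Poly_Mapping.single (s + B) (c::'k::comm_ring_1)"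
  by (simp add: right_diff_distrib mult_single)
lemma varmul: "(var v :: 'k::comm_ring_1 mpoly) * (mon A - mon B) = mon (X v + A) - mon (X v + B)"
  unfolding var_def by (rule smul)
lemma varmul_neg: "(- var v :: 'k::comm_ring_1 mpoly) * (mon A - mon B) = mon (X v + B) - mon (X v + A)"
proof -
  have "(- var v :: 'k mpoly) * (mon A - mon B) = - (var v * (mon A - mon B))" by simp
  also have "\<dots> = mon (X v + B) - mon (X v + A)" unfolding varmul by simp
  finally show ?thesis .
qed
lemma inS_var: "v \<in> V P \<Longrightarrow> in_S P (var v :: 'k::comm_ring_1 mpoly) \<and> in_S P (- var v :: 'k::comm_ring_1 mpoly)"
  unfolding in_S_def var_def by (simp add: keys_uminus')




lemma (in po) rtz_two':
  assumes fin: "finite (G P :: 'k::field mpoly set)" and g: "g1 \<in> G P" "g2 \<in> G P" "g1 \<noteq> g2"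
    and S: "S = c1 * g1 + c2 * (g2 :: 'k::field mpoly)" and c: "in_S P c1" "in_S P c2" and nz: "S \<noteq> 0"
    and l1: "lex_le lt (lead_monom lt (c1 * g1)) (lead_monom lt S)"
    and l2: "lex_le lt (lead_monom lt (c2 * g2)) (lead_monom lt S)"
  shows "reduces_to_zero P lt S"
  using rtz_two[OF fin g S c nz] l1 l2 by blast

theorem mainTheorem4:
  fixes P :: "vertex set" and lt :: "vertex \<Rightarrow> vertex \<Rightarrow> bool"
    and i j k l p q :: int
  assumes "collection_of_cells P"
    and "i < k" and "j < l" and "p > k" and "q > l"
    and "inner_interval P (i, j) (k, l)"
    and "inner_interval P (i, l) (p, q)"
    and "P_order P lt"
    and "\<not> coprime_monom
            (lead_monom lt (inner_minor (i, j) (k, l) :: ('k::field) mpoly))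
            (lead_monom lt (inner_minor (i, l) (p, q) :: 'k mpoly))"
  shows "reduces_to_zero P lt
           (S_poly lt (inner_minor (i, j) (k, l)) (inner_minor (i, l) (p, q)) :: 'k mpoly)
    \<longleftrightarrow>
    (let a = (i, j); b = (k, l); \<alpha> = (i, l); \<beta> = (p, q);
         d = (k, j); \<delta> = (p, l); \<gamma> = (i, q); h = (k, q); r = (p, j);
         m1 = Poly_Mapping.single d 1 + Poly_Mapping.single \<delta> 1 + Poly_Mapping.single \<gamma> 1;
         m2 = Poly_Mapping.single \<beta> 1 + Poly_Mapping.single a 1 + Poly_Mapping.single b 1
     in (lex_less lt m1 m2 \<and> ((lt h b \<and> lt \<delta> b) \<or> (lt h \<beta> \<and> lt \<delta> \<beta>)))
      \<or> (lex_less lt m1 m2 \<and> inner_interval P d \<delta> \<and> ((lt r a \<and> lt \<gamma> a) \<or> (lt r \<beta> \<and> lt \<gamma> \<beta>)))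
      \<or> (lex_less lt m2 m1 \<and> ((lt h d \<and> lt a d) \<or> (lt h \<gamma> \<and> lt a \<gamma>)))
      \<or> (lex_less lt m2 m1 \<and> inner_interval P d \<delta> \<and> ((lt r d \<and> lt b d) \<or> (lt r \<delta> \<and> lt b \<delta>))))"
proof -
  interpret po P lt by (unfold_locales) (rule assms(8))
  have ik: "i < k" and jl: "j < l" and kp: "k < p" and lq: "l < q" using assms(2-5) by auto
  note ineq = ik jl kp lq
  have inAB: "inner_interval P (i, j) (k, l)" and inAlB: "inner_interval P (i, l) (p, q)" using assms(6,7) by auto
  have inBB: "inner_interval P (k, l) (p, q)"
    using inAlB ik kp unfolding inner_iff proper_interval_def by auto
  have inAH: "inner_interval P (i, j) (k, q)"
    unfolding inner_iff proper_interval_def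
  proof (intro conjI allI impI)
    fix x y assume h: "fst (i, j) \<le> x \<and> x + 1 \<le> fst (k, q) \<and> snd (i, j) \<le> y \<and> y + 1 \<le> snd (k, q)"
    show "(x, y) \<in> P"
    proof (cases "y + 1 \<le> l")
      case True then show ?thesis using inAB h unfolding inner_iff by auto
    next
      case False then show ?thesis using inAlB h kp unfolding inner_iff by auto
    qed
  qed (use ineq in auto)
  have Va: "(i, j) \<in> V P" and Vb: "(k, l) \<in> V P" and Val: "(i, l) \<in> V P" and Vd: "(k, j) \<in> V P"
    using corners[OF inAB] by auto
  have Vbe: "(p, q) \<in> V P" and Vg: "(i, q) \<in> V P" and Vde: "(p, l) \<in> V P"
    using corners[OF inAlB] by auto
  have Vh: "(k, q) \<in> V P" using corners[OF inBB] by auto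
  note VV = Va Vb Val Vd Vbe Vg Vde Vh
  define F1 where "F1 = (inner_minor (i, j) (k, l) :: 'k mpoly)"
  define F2 where "F2 = (inner_minor (i, l) (p, q) :: 'k mpoly)"
  define A1 where "A1 = X (i, j) + X (k, l)"
  define B1 where "B1 = X (i, l) + X (k, j)"
  define A2 where "A2 = X (i, l) + X (p, q)"
  define B2 where "B2 = X (i, q) + X (p, l)"
  have F1: "F1 = mon A1 - mon B1" unfolding F1_def A1_def B1_def by (simp add: inner_minor_eq)
  have F2: "F2 = mon A2 - mon B2" unfolding F2_def A2_def B2_def by (simp add: inner_minor_eq)
  have AB1: "A1 \<noteq> B1" unfolding A1_def B1_def by (rule X2_neq) (use ineq in auto)
  have AB2: "A2 \<noteq> B2" unfolding A2_def B2_def by (rule X2_neq) (use ineq in auto)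
  have spA1: "sp A1" "sp B1" "sp A2" "sp B2" unfolding A1_def B1_def A2_def B2_def using VV sp2 by auto
  have lm1: "lead_monom lt F1 = A1 \<or> lead_monom lt F1 = B1" using lm_in2[OF AB1 spA1(1,2)] F1 by auto
  have lm2: "lead_monom lt F2 = A2 \<or> lead_monom lt F2 = B2" using lm_in2[OF AB2 spA1(3,4)] F2 by auto
  obtain v where v: "Poly_Mapping.lookup (lead_monom lt F1) v \<noteq> 0" "Poly_Mapping.lookup (lead_monom lt F2) v \<noteq> 0"
    using assms(9) unfolding coprime_monom_def F1_def F2_def by blast
  have lmF1: "lead_monom lt F1 = B1" and lmF2: "lead_monom lt F2 = A2"
  proof -
    have v1: "v = (i, j) \<or> v = (k, l) \<or> v = (i, l) \<or> v = (k, j)"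
      using lm1 lookup2_nz v(1) unfolding A1_def B1_def by metis
    have v2: "v = (i, l) \<or> v = (p, q) \<or> v = (i, q) \<or> v = (p, l)"
      using lm2 lookup2_nz v(2) unfolding A2_def B2_def by metis
    have vv: "v = (i, l)" using v1 v2 ineq by auto
    show "lead_monom lt F1 = B1"
    proof (rule ccontr)
      assume "lead_monom lt F1 \<noteq> B1"
      then have "lead_monom lt F1 = A1" using lm1 by blast
      then show False using v(1) vv lookup2_nz[of "(i,j)" "(k,l)" "(i,l)"] ineq unfolding A1_def by auto
    qed
    show "lead_monom lt F2 = A2"
    proof (rule ccontr)
      assume "lead_monom lt F2 \<noteq> A2"
      then have "lead_monom lt F2 = B2" using lm2 by blast
      then show False using v(2) vv lookup2_nz[of "(i,q)" "(p,l)" "(i,l)"] ineq unfolding B2_def by auto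
    qed
  qed
  define m1 where "m1 = X (k, j) + X (p, l) + X (i, q)"
  define m2 where "m2 = X (p, q) + X (i, j) + X (k, l)"
  have lc1: "lead_coeff_m lt F1 = -1" unfolding lead_coeff_m_def lmF1 unfolding F1 using AB1
    by (simp add: lookup_minus lookup_single when_def)
  have lc2: "lead_coeff_m lt F2 = 1" unfolding lead_coeff_m_def lmF2 unfolding F2 using AB2
    by (simp add: lookup_minus lookup_single when_def)
  have dif: "A2 - B1 = X (p, q)" unfolding A2_def B1_def
    by (rule poly_mapping_eqI) (use ineq in \<open>auto simp: lookup_add lookup_minus lookup_single when_def\<close>)
  have L1: "monom_lcm B1 A2 - B1 = X (p, q)" unfolding monom_lcm_def dif by (rule add_diff_cancel_left')
  have L2: "monom_lcm B1 A2 - A2 = X (k, j)"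
  proof -
    have "monom_lcm B1 A2 = A2 + X (k, j)" unfolding monom_lcm_def dif unfolding A2_def B1_def by (simp add: add_ac)
    then show ?thesis by simp
  qed
  have S: "S_poly lt F1 F2 = mon m1 - mon m2"
  proof -
    have "S_poly lt F1 F2 = Poly_Mapping.single (X (p, q)) (-1) * F1 - Poly_Mapping.single (X (k, j)) 1 * F2"
      unfolding S_poly_def Let_def lmF1 lmF2 L1 L2 lc1 lc2 by simp
    also have "\<dots> = (Poly_Mapping.single (X (p, q) + A1) (-1) - Poly_Mapping.single (X (p, q) + B1) (-1))
        - (mon (X (k, j) + A2) - mon (X (k, j) + B2))"
      unfolding F1 F2 smul ..
    also have "X (p, q) + A1 = m2" unfolding A1_def m2_def by (simp add: add_ac)
    also have "X (p, q) + B1 = X (k, j) + A2" unfolding A2_def B1_def by (simp add: add_ac)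
    also have "X (k, j) + B2 = m1" unfolding B2_def m1_def by (simp add: add_ac)
    finally show ?thesis by (simp add: single_uminus)
  qed

  have m12: "m1 \<noteq> m2" unfolding m1_def m2_def by (rule X3_neq) (use ineq in auto)
  have spm: "sp m1" "sp m2" unfolding m1_def m2_def using VV sp3' by auto
  have Snz: "(mon m1 - mon m2 :: 'k mpoly) \<noteq> 0" using keys_two[OF m12, where 'k='k] by auto
  have finG: "finite (G P :: 'k mpoly set)" using assms(1) finite_G unfolding collection_of_cells_def by blast
  have lmS: "(lead_monom lt (mon m1 - mon m2 :: 'k mpoly) = m1 \<and> lex_less lt m2 m1) \<or>
             (lead_monom lt (mon m1 - mon m2 :: 'k mpoly) = m2 \<and> lex_less lt m1 m2)"
    by (rule lm_in2[OF m12 spm])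
  have kS: "Poly_Mapping.keys (mon m1 - mon m2 :: 'k mpoly) = {m1, m2}" by (rule keys_two[OF m12])
  have asym12: "\<not> (lex_less lt m1 m2 \<and> lex_less lt m2 m1)" using lex_asym[OF spm] by blast
  define Fbh where "Fbh = (inner_minor (k, l) (p, q) :: 'k mpoly)"
  define Fah where "Fah = (inner_minor (i, j) (k, q) :: 'k mpoly)"
  define Fab where "Fab = (inner_minor (i, j) (p, q) :: 'k mpoly)"
  define Fdd where "Fdd = (inner_minor (k, j) (p, l) :: 'k mpoly)"
  have eFbh: "Fbh = mon (X (k, l) + X (p, q)) - mon (X (k, q) + X (p, l))" unfolding Fbh_def by (simp add: inner_minor_eq)
  have eFah: "Fah = mon (X (i, j) + X (k, q)) - mon (X (i, q) + X (k, j))" unfolding Fah_def by (simp add: inner_minor_eq)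
  have eFab: "Fab = mon (X (i, j) + X (p, q)) - mon (X (i, q) + X (p, j))" unfolding Fab_def by (simp add: inner_minor_eq)
  have eFdd: "Fdd = mon (X (k, j) + X (p, l)) - mon (X (k, l) + X (p, j))" unfolding Fdd_def by (simp add: inner_minor_eq)
  define T1 where "T1 = X (i, j) + (X (k, q) + X (p, l))"
  define T2 where "T2 = X (k, l) + (X (i, q) + X (p, j))"
  have prod1: "(- var (i, j)) * Fbh = mon T1 - mon m2"
  proof -
    have "X (i, j) + (X (k, l) + X (p, q)) = m2" unfolding m2_def by (simp add: add_ac)
    then show ?thesis unfolding eFbh varmul_neg T1_def by simp
  qed
  have prod2: "(- var (p, l)) * Fah = mon m1 - mon T1"
  proof -
    have "X (p, l) + (X (i, q) + X (k, j)) = m1" unfolding m1_def by (simp add: add_ac)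
    moreover have "X (p, l) + (X (i, j) + X (k, q)) = T1" unfolding T1_def by (simp add: add_ac)
    ultimately show ?thesis unfolding eFah varmul_neg by simp
  qed
  have prod3: "(- var (k, l)) * Fab = mon T2 - mon m2"
  proof -
    have "X (k, l) + (X (i, j) + X (p, q)) = m2" unfolding m2_def by (simp add: add_ac)
    then show ?thesis unfolding eFab varmul_neg T2_def by simp
  qed
  have prod4: "var (i, q) * Fdd = mon m1 - mon T2"
  proof -
    have "X (i, q) + (X (k, j) + X (p, l)) = m1" unfolding m1_def by (simp add: add_ac)
    moreover have "X (i, q) + (X (k, l) + X (p, j)) = T2" unfolding T2_def by (simp add: add_ac)
    ultimately show ?thesis unfolding eFdd varmul by simp
  qed
  have Id1: "mon m1 - mon m2 = (- var (i, j)) * Fbh + (- var (p, l)) * Fah"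
    unfolding prod1 prod2 by (simp add: algebra_simps)
  have Id2: "mon m1 - mon m2 = (- var (k, l)) * Fab + var (i, q) * Fdd"
    unfolding prod3 prod4 by (simp add: algebra_simps)
  have T1m1: "T1 \<noteq> m1" unfolding T1_def m1_def
    by (rule lookup_neq[where w="(k, j)"]) (use ineq in \<open>simp add: lookup_add lookup_single when_def\<close>)
  have T1m2: "T1 \<noteq> m2" unfolding T1_def m2_def
    by (rule lookup_neq[where w="(p, q)"]) (use ineq in \<open>simp add: lookup_add lookup_single when_def\<close>)
  have T2m1: "T2 \<noteq> m1" unfolding T2_def m1_def
    by (rule lookup_neq[where w="(k, j)"]) (use ineq in \<open>simp add: lookup_add lookup_single when_def\<close>)
  have T2m2: "T2 \<noteq> m2" unfolding T2_def m2_def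
    by (rule lookup_neq[where w="(p, q)"]) (use ineq in \<open>simp add: lookup_add lookup_single when_def\<close>)
  have spT1: "sp T1" unfolding T1_def using VV sp3 by auto
  have gBB: "Fbh \<in> G P" unfolding Fbh_def G_def using inBB by blast
  have gAH: "Fah \<in> G P" unfolding Fah_def G_def using inAH by blast
  have nBA: "Fbh \<noteq> Fah"
  proof
    assume e: "Fbh = Fah"
    have n1: "X (k, l) + X (p, q) \<noteq> X (i, j) + X (k, q)" by (rule X2_neq) (use ineq in auto)
    have n2: "X (k, l) + X (p, q) \<noteq> X (i, q) + X (k, j)" by (rule X2_neq) (use ineq in auto)
    have n3: "X (k, l) + X (p, q) \<noteq> X (k, q) + X (p, l)" by (rule X2_neq) (use ineq in auto)
    have "Poly_Mapping.lookup Fbh (X (k, l) + X (p, q)) = Poly_Mapping.lookup Fah (X (k, l) + X (p, q))" using e by simp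
    then show False using n1 n2 n3 n1[symmetric] n2[symmetric] n3[symmetric]
      unfolding eFbh eFah by (simp add: lookup_minus lookup_single when_def)
  qed
  have inDD_AB: "inner_interval P (k, j) (p, l) \<Longrightarrow> inner_interval P (i, j) (p, q)"
  proof -
    assume dd: "inner_interval P (k, j) (p, l)"
    show "inner_interval P (i, j) (p, q)"
      unfolding inner_iff proper_interval_def
    proof (intro conjI allI impI)
      fix x y assume h: "fst (i, j) \<le> x \<and> x + 1 \<le> fst (p, q) \<and> snd (i, j) \<le> y \<and> y + 1 \<le> snd (p, q)"
      show "(x, y) \<in> P"
      proof (cases "l \<le> y")
        case True then show ?thesis using inAlB h unfolding inner_iff by auto
      next
        case False
        show ?thesis
        proof (cases "x + 1 \<le> k")
          case True then show ?thesis using inAB h False unfolding inner_iff by auto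
        next
          case F2: False then show ?thesis using dd h False unfolding inner_iff by auto
        qed
      qed
    qed (use ineq in auto)
  qed
  have AB_DD: "inner_interval P (i, j) (p, q) \<Longrightarrow> inner_interval P (k, j) (p, l)"
    unfolding inner_iff proper_interval_def using ineq by auto
  have key: "reduces_to_zero P lt (mon m1 - mon m2 :: 'k mpoly) \<longleftrightarrow>
      (lex_less lt m1 m2 \<and> ((lt (k, q) (k, l) \<and> lt (p, l) (k, l)) \<or> (lt (k, q) (p, q) \<and> lt (p, l) (p, q))))
    \<or> (lex_less lt m1 m2 \<and> inner_interval P (k, j) (p, l) \<and> ((lt (p, j) (i, j) \<and> lt (i, q) (i, j)) \<or> (lt (p, j) (p, q) \<and> lt (i, q) (p, q))))
    \<or> (lex_less lt m2 m1 \<and> ((lt (k, q) (k, j) \<and> lt (i, j) (k, j)) \<or> (lt (k, q) (i, q) \<and> lt (i, j) (i, q))))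
    \<or> (lex_less lt m2 m1 \<and> inner_interval P (k, j) (p, l) \<and> ((lt (p, j) (k, j) \<and> lt (k, l) (k, j)) \<or> (lt (p, j) (p, l) \<and> lt (k, l) (p, l))))"
    (is "?L \<longleftrightarrow> ?C1 \<or> ?C2 \<or> ?C3 \<or> ?C4")
  proof
    assume "?C1 \<or> ?C2 \<or> ?C3 \<or> ?C4"
    then consider "?C1" | "?C2" | "?C3" | "?C4" by blast
    then show ?L
    proof cases
      case 1
      have lt12: "lex_less lt m1 m2" using 1 by blast
      have lmS2: "lead_monom lt (mon m1 - mon m2 :: 'k mpoly) = m2" using lmS lt12 asym12 by blast
      have pl: "lex_less lt (X (k, q) + X (p, l)) (X (k, l) + X (p, q))"
        using pair_lex[where ua="(k, q)" and ub="(p, l)" and va="(k, l)" and vb="(p, q)"] 1 VV ineq by auto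
      have "lex_less lt (X (i, j) + (X (k, q) + X (p, l))) (X (i, j) + (X (k, l) + X (p, q)))" by (rule lex_add_left[OF pl])
      then have Tlt: "lex_less lt T1 m2" unfolding T1_def m2_def by (simp add: add_ac)
      show ?thesis
      proof (rule rtz_two'[OF finG gBB gAH nBA Id1])
        show "in_S P (- var (i, j) :: 'k mpoly)" using inS_var Va by blast
        show "in_S P (- var (p, l) :: 'k mpoly)" using inS_var Vde by blast
        show "mon m1 - mon m2 \<noteq> (0::'k mpoly)" by (rule Snz)
        show "lex_le lt (lead_monom lt (- var (i, j) * Fbh)) (lead_monom lt (mon m1 - mon m2 :: 'k mpoly))"
          unfolding prod1 lmS2 by (rule lm_two_le[OF T1m2 spT1 spm(2)]) (use Tlt in \<open>auto simp: lex_le_def\<close>)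
        show "lex_le lt (lead_monom lt (- var (p, l) * Fah)) (lead_monom lt (mon m1 - mon m2 :: 'k mpoly))"
          unfolding prod2 lmS2 by (rule lm_two_le[OF T1m1[symmetric] spm(1) spT1]) (use Tlt lt12 in \<open>auto simp: lex_le_def\<close>)
      qed
    next
      case 3
      have lt21: "lex_less lt m2 m1" using 3 by blast
      have lmS1: "lead_monom lt (mon m1 - mon m2 :: 'k mpoly) = m1" using lmS lt21 asym12 by blast
      have pl: "lex_less lt (X (k, q) + X (i, j)) (X (k, j) + X (i, q))"
        using pair_lex[where ua="(k, q)" and ub="(i, j)" and va="(k, j)" and vb="(i, q)"] 3 VV ineq by auto
      have "lex_less lt (X (p, l) + (X (k, q) + X (i, j))) (X (p, l) + (X (k, j) + X (i, q)))" by (rule lex_add_left[OF pl])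
      then have Tlt: "lex_less lt T1 m1" unfolding T1_def m1_def by (simp add: add_ac)
      show ?thesis
      proof (rule rtz_two'[OF finG gBB gAH nBA Id1])
        show "in_S P (- var (i, j) :: 'k mpoly)" using inS_var Va by blast
        show "in_S P (- var (p, l) :: 'k mpoly)" using inS_var Vde by blast
        show "mon m1 - mon m2 \<noteq> (0::'k mpoly)" by (rule Snz)
        show "lex_le lt (lead_monom lt (- var (i, j) * Fbh)) (lead_monom lt (mon m1 - mon m2 :: 'k mpoly))"
          unfolding prod1 lmS1 by (rule lm_two_le[OF T1m2 spT1 spm(2)]) (use Tlt lt21 in \<open>auto simp: lex_le_def\<close>)
        show "lex_le lt (lead_monom lt (- var (p, l) * Fah)) (lead_monom lt (mon m1 - mon m2 :: 'k mpoly))"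
          unfolding prod2 lmS1 by (rule lm_two_le[OF T1m1[symmetric] spm(1) spT1]) (use Tlt in \<open>auto simp: lex_le_def\<close>)
      qed
    next
      case 2
      have lt12: "lex_less lt m1 m2" using 2 by blast
      have lmS2: "lead_monom lt (mon m1 - mon m2 :: 'k mpoly) = m2" using lmS lt12 asym12 by blast
      have dd: "inner_interval P (k, j) (p, l)" using 2 by blast
      have Vr: "(p, j) \<in> V P" using corners[OF dd] by simp
      have spT2: "sp T2" unfolding T2_def using VV Vr sp3 by auto
      have gAB: "Fab \<in> G P" unfolding Fab_def G_def using inDD_AB[OF dd] by blast
      have gDD: "Fdd \<in> G P" unfolding Fdd_def G_def using dd by blast
      have nAD: "Fab \<noteq> Fdd"
      proof
        assume e: "Fab = Fdd"
        have n1: "X (i, j) + X (p, q) \<noteq> X (k, j) + X (p, l)" by (rule X2_neq) (use ineq in auto)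
        have n2: "X (i, j) + X (p, q) \<noteq> X (k, l) + X (p, j)" by (rule X2_neq) (use ineq in auto)
        have n3: "X (i, j) + X (p, q) \<noteq> X (i, q) + X (p, j)" by (rule X2_neq) (use ineq in auto)
        have "Poly_Mapping.lookup Fab (X (i, j) + X (p, q)) = Poly_Mapping.lookup Fdd (X (i, j) + X (p, q))" using e by simp
        then show False using n1 n2 n3 n1[symmetric] n2[symmetric] n3[symmetric]
          unfolding eFab eFdd by (simp add: lookup_minus lookup_single when_def)
      qed
      have pl: "lex_less lt (X (p, j) + X (i, q)) (X (i, j) + X (p, q))"
        using pair_lex[where ua="(p, j)" and ub="(i, q)" and va="(i, j)" and vb="(p, q)"] 2 VV Vr ineq by auto
      have "lex_less lt (X (k, l) + (X (p, j) + X (i, q))) (X (k, l) + (X (i, j) + X (p, q)))" by (rule lex_add_left[OF pl])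
      then have Tlt: "lex_less lt T2 m2" unfolding T2_def m2_def by (simp add: add_ac)
      show ?thesis
      proof (rule rtz_two'[OF finG gAB gDD nAD Id2])
        show "in_S P (- var (k, l) :: 'k mpoly)" using inS_var Vb by blast
        show "in_S P (var (i, q) :: 'k mpoly)" using inS_var Vg by blast
        show "mon m1 - mon m2 \<noteq> (0::'k mpoly)" by (rule Snz)
        show "lex_le lt (lead_monom lt (- var (k, l) * Fab)) (lead_monom lt (mon m1 - mon m2 :: 'k mpoly))"
          unfolding prod3 lmS2 by (rule lm_two_le[OF T2m2 spT2 spm(2)]) (use Tlt in \<open>auto simp: lex_le_def\<close>)
        show "lex_le lt (lead_monom lt (var (i, q) * Fdd)) (lead_monom lt (mon m1 - mon m2 :: 'k mpoly))"
          unfolding prod4 lmS2 by (rule lm_two_le[OF T2m1[symmetric] spm(1) spT2]) (use Tlt lt12 in \<open>auto simp: lex_le_def\<close>)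
      qed
    next
      case 4
      have lt21: "lex_less lt m2 m1" using 4 by blast
      have lmS1: "lead_monom lt (mon m1 - mon m2 :: 'k mpoly) = m1" using lmS lt21 asym12 by blast
      have dd: "inner_interval P (k, j) (p, l)" using 4 by blast
      have Vr: "(p, j) \<in> V P" using corners[OF dd] by simp
      have spT2: "sp T2" unfolding T2_def using VV Vr sp3 by auto
      have gAB: "Fab \<in> G P" unfolding Fab_def G_def using inDD_AB[OF dd] by blast
      have gDD: "Fdd \<in> G P" unfolding Fdd_def G_def using dd by blast
      have nAD: "Fab \<noteq> Fdd"
      proof
        assume e: "Fab = Fdd"
        have n1: "X (i, j) + X (p, q) \<noteq> X (k, j) + X (p, l)" by (rule X2_neq) (use ineq in auto)
        have n2: "X (i, j) + X (p, q) \<noteq> X (k, l) + X (p, j)" by (rule X2_neq) (use ineq in auto)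
        have n3: "X (i, j) + X (p, q) \<noteq> X (i, q) + X (p, j)" by (rule X2_neq) (use ineq in auto)
        have "Poly_Mapping.lookup Fab (X (i, j) + X (p, q)) = Poly_Mapping.lookup Fdd (X (i, j) + X (p, q))" using e by simp
        then show False using n1 n2 n3 n1[symmetric] n2[symmetric] n3[symmetric]
          unfolding eFab eFdd by (simp add: lookup_minus lookup_single when_def)
      qed
      have pl: "lex_less lt (X (p, j) + X (k, l)) (X (k, j) + X (p, l))"
        using pair_lex[where ua="(p, j)" and ub="(k, l)" and va="(k, j)" and vb="(p, l)"] 4 VV Vr ineq by auto
      have "lex_less lt (X (i, q) + (X (p, j) + X (k, l))) (X (i, q) + (X (k, j) + X (p, l)))" by (rule lex_add_left[OF pl])
      then have Tlt: "lex_less lt T2 m1" unfolding T2_def m1_def by (simp add: add_ac)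
      show ?thesis
      proof (rule rtz_two'[OF finG gAB gDD nAD Id2])
        show "in_S P (- var (k, l) :: 'k mpoly)" using inS_var Vb by blast
        show "in_S P (var (i, q) :: 'k mpoly)" using inS_var Vg by blast
        show "mon m1 - mon m2 \<noteq> (0::'k mpoly)" by (rule Snz)
        show "lex_le lt (lead_monom lt (- var (k, l) * Fab)) (lead_monom lt (mon m1 - mon m2 :: 'k mpoly))"
          unfolding prod3 lmS1 by (rule lm_two_le[OF T2m2 spT2 spm(2)]) (use Tlt lt21 in \<open>auto simp: lex_le_def\<close>)
        show "lex_le lt (lead_monom lt (var (i, q) * Fdd)) (lead_monom lt (mon m1 - mon m2 :: 'k mpoly))"
          unfolding prod4 lmS1 by (rule lm_two_le[OF T2m1[symmetric] spm(1) spT2]) (use Tlt in \<open>auto simp: lex_le_def\<close>)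
      qed
    qed
  next
    assume red: ?L
    consider "lex_less lt m1 m2" | "lex_less lt m2 m1" using lmS by blast
    then show "?C1 \<or> ?C2 \<or> ?C3 \<or> ?C4"
    proof cases
      case 1
      have lmS2: "lead_monom lt (mon m1 - mon m2 :: 'k mpoly) = m2" using lmS 1 asym12 by blast
      obtain a' b' where inn: "inner_interval P a' b'"
        and D: "\<forall>v. Poly_Mapping.lookup (lead_monom lt (inner_minor a' b' :: 'k mpoly)) v \<le> Poly_Mapping.lookup m2 v"
        using fwd[OF red _ lmS2] kS by auto
      obtain x1 y1 where a': "a' = (x1, y1)" by (cases a')
      obtain x2 y2 where b': "b' = (x2, y2)" by (cases b')
      have pr: "x1 < x2" "y1 < y2" using inn unfolding a' b' inner_interval_def proper_interval_def by auto
      have cV: "(x1, y1) \<in> V P" "(x2, y2) \<in> V P" "(x1, y2) \<in> V P" "(x2, y1) \<in> V P"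
        using corners[OF inn] unfolding a' b' by auto
      define Dg where "Dg = X (x1, y1) + X (x2, y2)"
      define Ag where "Ag = X (x1, y2) + X (x2, y1)"
      have eg: "(inner_minor a' b' :: 'k mpoly) = mon Dg - mon Ag" unfolding a' b' Dg_def Ag_def by (simp add: inner_minor_eq)
      have DA: "Dg \<noteq> Ag" unfolding Dg_def Ag_def by (rule X2_neq) (use pr in auto)
      have spD: "sp Dg" and spA: "sp Ag" unfolding Dg_def Ag_def using cV sp2 by auto
      have m2mem: "\<And>v. Poly_Mapping.lookup m2 v \<noteq> 0 \<Longrightarrow> v = (p, q) \<or> v = (i, j) \<or> v = (k, l)"
        unfolding m2_def by (rule lookup3_nz)
      consider "lead_monom lt (inner_minor a' b' :: 'k mpoly) = Dg" "lex_less lt Ag Dg"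
        | "lead_monom lt (inner_minor a' b' :: 'k mpoly) = Ag" "lex_less lt Dg Ag"
        using lm_in2[OF DA spD spA, where 'k='k] eg by auto
      then show ?thesis
      proof cases
        case 2
        have "Poly_Mapping.lookup m2 (x1, y2) \<noteq> 0 \<and> Poly_Mapping.lookup m2 (x2, y1) \<noteq> 0"
          using D2[of "(x1, y2)" "(x2, y1)" m2] D 2(1) unfolding Ag_def by simp
        then have "((x1, y2) = (p, q) \<or> (x1, y2) = (i, j) \<or> (x1, y2) = (k, l)) \<and>
              ((x2, y1) = (p, q) \<or> (x2, y1) = (i, j) \<or> (x2, y1) = (k, l))"
          using m2mem[of "(x1, y2)"] m2mem[of "(x2, y1)"] by blast
        then have False using pr ineq by auto
        then show ?thesis by blast
      next
        case Dc: 1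
        have "Poly_Mapping.lookup m2 (x1, y1) \<noteq> 0 \<and> Poly_Mapping.lookup m2 (x2, y2) \<noteq> 0"
          using D2[of "(x1, y1)" "(x2, y2)" m2] D Dc(1) unfolding Dg_def by simp
        then have "(x1 = i \<and> y1 = j \<and> x2 = k \<and> y2 = l) \<or> (x1 = i \<and> y1 = j \<and> x2 = p \<and> y2 = q) \<or> (x1 = k \<and> y1 = l \<and> x2 = p \<and> y2 = q)"
          using m2mem[of "(x1, y1)"] m2mem[of "(x2, y2)"] pr ineq by auto
        then consider "x1 = i" "y1 = j" "x2 = k" "y2 = l" | "x1 = i" "y1 = j" "x2 = p" "y2 = q" | "x1 = k" "y1 = l" "x2 = p" "y2 = q"
          by blast
        then show ?thesis
        proof cases
          case 1
          have "inner_minor a' b' = F1" unfolding F1_def a' b' using 1 by simp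
          then have "Dg = B1" using Dc(1) lmF1 by simp
          moreover have "Dg = A1" unfolding Dg_def A1_def using 1 by simp
          ultimately show ?thesis using AB1 by simp
        next
          case 3
          have "lex_less lt (X (k, q) + X (p, l)) (X (k, l) + X (p, q))" using Dc(2) 3 unfolding Ag_def Dg_def by simp
          then have "(lt (k, q) (k, l) \<and> lt (p, l) (k, l)) \<or> (lt (k, q) (p, q) \<and> lt (p, l) (p, q))"
            using pair_lex[where ua="(k, q)" and ub="(p, l)" and va="(k, l)" and vb="(p, q)"] VV ineq by auto
          then show ?thesis using 1 by blast
        next
          case 2
          have dd: "inner_interval P (k, j) (p, l)" using AB_DD inn 2 unfolding a' b' by simp
          have Vr: "(p, j) \<in> V P" using corners[OF dd] by simp
          have "lex_less lt (X (i, q) + X (p, j)) (X (i, j) + X (p, q))" using Dc(2) 2 unfolding Ag_def Dg_def by simp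
          then have "lex_less lt (X (p, j) + X (i, q)) (X (i, j) + X (p, q))" by (simp add: add.commute)
          then have "(lt (p, j) (i, j) \<and> lt (i, q) (i, j)) \<or> (lt (p, j) (p, q) \<and> lt (i, q) (p, q))"
            using pair_lex[where ua="(p, j)" and ub="(i, q)" and va="(i, j)" and vb="(p, q)"] VV Vr ineq by auto
          then show ?thesis using 1 dd by blast
        qed
      qed
    next
      case 2
      have lmS1: "lead_monom lt (mon m1 - mon m2 :: 'k mpoly) = m1" using lmS 2 asym12 by blast
      obtain a' b' where inn: "inner_interval P a' b'"
        and D: "\<forall>v. Poly_Mapping.lookup (lead_monom lt (inner_minor a' b' :: 'k mpoly)) v \<le> Poly_Mapping.lookup m1 v"
        using fwd[OF red _ lmS1] kS by auto
      obtain x1 y1 where a': "a' = (x1, y1)" by (cases a')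
      obtain x2 y2 where b': "b' = (x2, y2)" by (cases b')
      have pr: "x1 < x2" "y1 < y2" using inn unfolding a' b' inner_interval_def proper_interval_def by auto
      have cV: "(x1, y1) \<in> V P" "(x2, y2) \<in> V P" "(x1, y2) \<in> V P" "(x2, y1) \<in> V P"
        using corners[OF inn] unfolding a' b' by auto
      define Dg where "Dg = X (x1, y1) + X (x2, y2)"
      define Ag where "Ag = X (x1, y2) + X (x2, y1)"
      have eg: "(inner_minor a' b' :: 'k mpoly) = mon Dg - mon Ag" unfolding a' b' Dg_def Ag_def by (simp add: inner_minor_eq)
      have DA: "Dg \<noteq> Ag" unfolding Dg_def Ag_def by (rule X2_neq) (use pr in auto)
      have spD: "sp Dg" and spA: "sp Ag" unfolding Dg_def Ag_def using cV sp2 by auto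
      have m1mem: "\<And>v. Poly_Mapping.lookup m1 v \<noteq> 0 \<Longrightarrow> v = (k, j) \<or> v = (p, l) \<or> v = (i, q)"
        unfolding m1_def by (rule lookup3_nz)
      consider "lead_monom lt (inner_minor a' b' :: 'k mpoly) = Dg" "lex_less lt Ag Dg"
        | "lead_monom lt (inner_minor a' b' :: 'k mpoly) = Ag" "lex_less lt Dg Ag"
        using lm_in2[OF DA spD spA, where 'k='k] eg by auto
      then show ?thesis
      proof cases
        case Dc: 1
        have "Poly_Mapping.lookup m1 (x1, y1) \<noteq> 0 \<and> Poly_Mapping.lookup m1 (x2, y2) \<noteq> 0"
          using D2[of "(x1, y1)" "(x2, y2)" m1] D Dc(1) unfolding Dg_def by simp
        then have xx: "x1 = k" "y1 = j" "x2 = p" "y2 = l"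
          using m1mem[of "(x1, y1)"] m1mem[of "(x2, y2)"] pr ineq by auto
        have dd: "inner_interval P (k, j) (p, l)" using inn xx unfolding a' b' by simp
        have Vr: "(p, j) \<in> V P" using corners[OF dd] by simp
        have "lex_less lt (X (k, l) + X (p, j)) (X (k, j) + X (p, l))" using Dc(2) xx unfolding Ag_def Dg_def by simp
        then have "lex_less lt (X (p, j) + X (k, l)) (X (k, j) + X (p, l))" by (simp add: add.commute)
        then have "(lt (p, j) (k, j) \<and> lt (k, l) (k, j)) \<or> (lt (p, j) (p, l) \<and> lt (k, l) (p, l))"
          using pair_lex[where ua="(p, j)" and ub="(k, l)" and va="(k, j)" and vb="(p, l)"] VV Vr ineq by auto
        then show ?thesis using 2 dd by blast
      next
        case Ac: 2
        have "Poly_Mapping.lookup m1 (x1, y2) \<noteq> 0 \<and> Poly_Mapping.lookup m1 (x2, y1) \<noteq> 0"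
          using D2[of "(x1, y2)" "(x2, y1)" m1] D Ac(1) unfolding Ag_def by simp
        then have "(x1 = i \<and> y2 = q \<and> x2 = k \<and> y1 = j) \<or> (x1 = i \<and> y2 = q \<and> x2 = p \<and> y1 = l)"
          using m1mem[of "(x1, y2)"] m1mem[of "(x2, y1)"] pr ineq by auto
        then consider "x1 = i" "y2 = q" "x2 = k" "y1 = j" | "x1 = i" "y2 = q" "x2 = p" "y1 = l" by blast
        then show ?thesis
        proof cases
          case 2
          have "inner_minor a' b' = F2" unfolding F2_def a' b' using 2 by simp
          then have "Ag = A2" using Ac(1) lmF2 by simp
          moreover have "Ag = B2" unfolding Ag_def B2_def using 2 by simp
          ultimately show ?thesis using AB2 by simp
        next
          case 1
          have "lex_less lt (X (i, j) + X (k, q)) (X (i, q) + X (k, j))" using Ac(2) 1 unfolding Ag_def Dg_def by simp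
          then have "lex_less lt (X (k, q) + X (i, j)) (X (k, j) + X (i, q))" by (simp add: add.commute)
          then have "(lt (k, q) (k, j) \<and> lt (i, j) (k, j)) \<or> (lt (k, q) (i, q) \<and> lt (i, j) (i, q))"
            using pair_lex[where ua="(k, q)" and ub="(i, j)" and va="(k, j)" and vb="(i, q)"] VV ineq by auto
          then show ?thesis using \<open>lex_less lt m2 m1\<close> by blast
        qed
      qed
    qed
  qed
  show ?thesis
    unfolding Let_def F1_def[symmetric] F2_def[symmetric] S m1_def[symmetric] m2_def[symmetric]
    by (rule key)
qed


end
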